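(* Let $\phi:\{0,1\}^N\to\{0,1\}$ be a boolean function, regarded as a multi-valued logic gate with $k=N$, $T_i=\{0,1\}$, $w(i,0)=0$, $w(i,1)=1$ for all $i$, and output set $T=\{0,1\}\subset\mathbb{R}$ (so $N(\overline{\phi})=N$). Then $\mathrm{cs}(\overline{\phi})\le s(\phi)$.
   Context: Sensitivity: for $z\in\{0,1\}^N$, let $z^i$ be obtained from $z$ by changing its $i$-th coordinate; $s(\phi,z)$ is the number of indices $i$ with $\phi(z)\ne\phi(z^i)$, and $s(\phi)=\max_z s(\phi,z)$. Standard simplex: $\Delta^{m}=\{(t_0,\dots,t_m)\in\mathbb{R}^{m+1}: t_i\ge0,\ \sum_i t_i=1\}$; for $0\le j\le m$, $\Delta^m_j=\{(t_0,\dots,\widehat{t_j},\dots,t_m):(t_0,\dots,t_m)\in\Delta^m,\ t_j\neq0\}\subseteq\mathbb{R}^m$. Multi-valued logic gate: finite sets $T_i=\{w(i,0),\dots,w(i,n_i-1)\}$ ($i=1,\dots,k$), a finite set $T\subset\mathbb{R}^m$ and $\phi:T_1\times\cdots\times T_k\to T$. Fourier series expansion: $\overline{\phi}:\Delta^{n_1-1}\times\cdots\times\Delta^{n_k-1}\to\mathbb{R}^m$, $\overline{\phi}((t_{1,j})_j,\dots,(t_{k,j})_j)=\sum_{(j_1,\dots,j_k)}\big(\prod_{s=1}^k t_{s,j_s}\big)\phi(w(1,j_1),\dots,w(k,j_k))$. $N(\overline{\phi})=n_1+\cdots+n_k-k$. For $z=(w(1,j(z,1)),\dots,w(k,j(z,k)))$: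 $C(\overline{\phi},z)=\prod_{i=1}^k\Delta^{n_i-1}_{j(z,i)}\subseteq\mathbb{R}^{N(\overline\phi)}$, and $f_z:\mathbb{R}^{N(\overline\phi)}\to\mathbb{R}^m$ is the polynomial map in the variables $t_{i,j}$ ($j\ne j(z,i)$, ordered lexicographically) obtained from the multilinear formula for $\overline{\phi}$ by substituting $t_{i,j(z,i)}=1-\sum_{j\neq j(z,i)}t_{i,j}$. Signs: for $g:\mathbb{R}^n\to\mathbb{R}$ and nonempty $C$, $\mathrm{sign}_C(g)=+1,0,-1$ if $g>0$, $g=0$, $g<0$ on all of $C$ respectively, and $u$ (formal symbol) otherwise; $\mathrm{Sign}_C(g)=(\mathrm{sign}_C(\partial g/\partial x_1),\dots,\mathrm{sign}_C(\partial g/\partial x_n))$. $S_n$: nonzero tuples in $\{-1,0,1\}^n$ with first nonzero entry $1$. $t\in\{1,0,-1,u\}^n$ eliminates $s\in S_n$ if (i) $t_i\neq0\neq s_i$ for some $i$; (ii) there is $k\in\{\pm1\}$ with $t_i=ks_i$ whenever $s_i\ne0$, $t_i\ne0$; (iii) $s_i=0$ whenever $t_i=u$. $\mathrm{Elim}(X)$ = set of elements of $S_n$ eliminated by some element of $X$. $\mathrm{Sens}_C(f)$ = set of $v\in S_n$ eliminated by $\mathrm{Sign}_C(\pi\circ f)$ for some differentiable $\pi:\mathbb{R}^m\to\mathbb{R}$. Continuous sensitivity: with $N'=N(\overline\phi)$, $\mathrm{cs}(\overline{\phi},z)=\log_3\big(3^{N'}-2|\mathrm{Elim}(S_{N'}\setminus\mathrm{Sens}_{C(\overline{\phi},z)}(f_z))|\big)$,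 $\mathrm{cs}(\overline{\phi})=\max_z\mathrm{cs}(\overline{\phi},z)$. *)

theory Defs
  imports "HOL-Analysis.Analysis"
begin

definition flip_at :: "bool list \<Rightarrow> nat \<Rightarrow> bool list" where
  "flip_at z i = z[i := \<not> z ! i]"

definition sens_at :: "(bool list \<Rightarrow> bool) \<Rightarrow> nat \<Rightarrow> bool list \<Rightarrow> nat" where
  "sens_at \<phi> N z = card {i. i < N \<and> \<phi> z \<noteq> \<phi> (flip_at z i)}"

definition sens :: "(bool list \<Rightarrow> bool) \<Rightarrow> nat \<Rightarrow> nat" where
  "sens \<phi> N = Max (sens_at \<phi> N ` {z. length z = N})"

section \<open>Signs, elimination, Sens (vectors of R^n as nat \<Rightarrow> real, coordinates 0..<n)\<close>

datatype sgn4 = SPos | SZero | SNeg | SU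

definition sign_on :: "(nat \<Rightarrow> real) set \<Rightarrow> ((nat \<Rightarrow> real) \<Rightarrow> real) \<Rightarrow> sgn4" where
  "sign_on C g = (if \<forall>x\<in>C. g x > 0 then SPos
                  else if \<forall>x\<in>C. g x = 0 then SZero
                  else if \<forall>x\<in>C. g x < 0 then SNeg else SU)"

definition partial :: "((nat \<Rightarrow> real) \<Rightarrow> real) \<Rightarrow> nat \<Rightarrow> (nat \<Rightarrow> real) \<Rightarrow> real" where
  "partial g i x = deriv (\<lambda>s. g (x(i := s))) (x i)"

definition Sign_on :: "nat \<Rightarrow> (nat \<Rightarrow> real) set \<Rightarrow> ((nat \<Rightarrow> real) \<Rightarrow> real) \<Rightarrow> sgn4 list" where
  "Sign_on n C g = map (\<lambda>i. sign_on C (partial g i)) [0..<n]"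

definition S_set :: "nat \<Rightarrow> int list set" where
  "S_set n = {s. length s = n \<and> set s \<subseteq> {-1, 0, 1} \<and> (\<exists>i<n. s ! i \<noteq> 0)
                 \<and> s ! (LEAST i. s ! i \<noteq> 0) = 1}"

definition to_sgn4 :: "int \<Rightarrow> sgn4" where
  "to_sgn4 v = (if v > 0 then SPos else if v < 0 then SNeg else SZero)"

definition eliminates :: "sgn4 list \<Rightarrow> int list \<Rightarrow> bool" where
  "eliminates t s \<longleftrightarrow>
     (\<exists>i<length s. t ! i \<noteq> SZero \<and> s ! i \<noteq> 0) \<and>
     (\<exists>k\<in>{1, -1::int}. \<forall>i<length s. s ! i \<noteq> 0 \<and> t ! i \<noteq> SZero \<longrightarrow> t ! i = to_sgn4 (k * s ! i)) \<and>
     (\<forall>i<length s. t ! i = SU \<longrightarrow> s ! i = 0)"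

definition Elim :: "nat \<Rightarrow> sgn4 list set \<Rightarrow> int list set" where
  "Elim n X = {s \<in> S_set n. \<exists>t\<in>X. eliminates t s}"

text \<open>Sens for a map f : R^n \<rightarrow> R (here m = 1), \<pi> : R \<rightarrow> R differentiable\<close>
definition Sens :: "nat \<Rightarrow> (nat \<Rightarrow> real) set \<Rightarrow> ((nat \<Rightarrow> real) \<Rightarrow> real) \<Rightarrow> int list set" where
  "Sens n C f = {v \<in> S_set n. \<exists>\<pi> :: real \<Rightarrow> real. (\<forall>y. \<pi> differentiable (at y))
                    \<and> eliminates (Sign_on n C (\<pi> \<circ> f)) v}"

text \<open>elements of S_n are regarded as elements of {1,0,-1,u}^n via to_sgn4\<close>
definition cs_of :: "nat \<Rightarrow> (nat \<Rightarrow> real) set \<Rightarrow> ((nat \<Rightarrow> real) \<Rightarrow> real) \<Rightarrow> real" where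
  "cs_of n C f = log 3 (3 ^ n - 2 * real (card (Elim n (map to_sgn4 ` (S_set n - Sens n C f)))))"

text \<open>Fourier series expansion: t i j is the coordinate t_{i,j}, j \<in> {0,1}; w(i,0)=0=False, w(i,1)=1=True.\<close>
definition fourier_bool :: "(bool list \<Rightarrow> bool) \<Rightarrow> nat \<Rightarrow> (nat \<Rightarrow> nat \<Rightarrow> real) \<Rightarrow> real" where
  "fourier_bool \<phi> N t = (\<Sum>w\<in>{w. length w = N}. (\<Prod>i<N. t i (if w ! i then 1 else 0)) * of_bool (\<phi> w))"

definition jz :: "bool list \<Rightarrow> nat \<Rightarrow> nat" where
  "jz z i = (if z ! i then 1 else 0)"

text \<open>Delta^1_j as a subset of R (coordinate t_{1-j} of points of Delta^1 with t_j \<noteq> 0)\<close>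
definition Delta1_face :: "nat \<Rightarrow> real set" where
  "Delta1_face j = {t. \<exists>t0 t1. t0 \<ge> 0 \<and> t1 \<ge> 0 \<and> t0 + t1 = 1 \<and> [t0, t1] ! j \<noteq> 0 \<and> t = [t0, t1] ! (1 - j)}"

definition C_bool :: "nat \<Rightarrow> bool list \<Rightarrow> (nat \<Rightarrow> real) set" where
  "C_bool N z = {x. (\<forall>i<N. x i \<in> Delta1_face (jz z i)) \<and> (\<forall>i\<ge>N. x i = 0)}"

text \<open>f_z: variable x_i stands for t_{i,1-j(z,i)}; substitute t_{i,j(z,i)} = 1 - x_i.\<close>
definition f_bool :: "(bool list \<Rightarrow> bool) \<Rightarrow> nat \<Rightarrow> bool list \<Rightarrow> (nat \<Rightarrow> real) \<Rightarrow> real" where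
  "f_bool \<phi> N z x = fourier_bool \<phi> N (\<lambda>i j. if j = jz z i then 1 - x i else x i)"

definition cs_bool_at :: "(bool list \<Rightarrow> bool) \<Rightarrow> nat \<Rightarrow> bool list \<Rightarrow> real" where
  "cs_bool_at \<phi> N z = cs_of N (C_bool N z) (f_bool \<phi> N z)"

definition cs_bool :: "(bool list \<Rightarrow> bool) \<Rightarrow> nat \<Rightarrow> real" where
  "cs_bool \<phi> N = Max (cs_bool_at \<phi> N ` {z. length z = N})"

end

theory Submission
  imports Defs
begin

lemma card_lists_nth:
  "card {xs. length xs = n \<and> (\<forall>i<n. xs!i \<in> F i)} = (\<Prod>i<n. card (F i))"
proof (induction n arbitrary: F)
  case 0
  then show ?case by simp
next
  case (Suc n)
  have eq: "{xs. length xs = Suc n \<and> (\<forall>i<Suc n. xs!i \<in> F i)} =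
     (\<lambda>(x,xs). x#xs) ` (F 0 \<times> {xs. length xs = n \<and> (\<forall>i<n. xs!i \<in> F (Suc i))})"
  proof (rule set_eqI, rule iffI)
    fix ys assume "ys \<in> {xs. length xs = Suc n \<and> (\<forall>i<Suc n. xs!i \<in> F i)}"
    then obtain x xs where ys: "ys = x # xs" "length xs = n" and h: "\<forall>i<Suc n. ys!i \<in> F i"
      by (auto simp: length_Suc_conv)
    have "x \<in> F 0" using h ys by auto
    moreover have "\<forall>i<n. xs!i \<in> F (Suc i)" using h ys by auto
    ultimately show "ys \<in> (\<lambda>(x,xs). x#xs) ` (F 0 \<times> {xs. length xs = n \<and> (\<forall>i<n. xs!i \<in> F (Suc i))})"
      using ys by force
  next
    fix ys assume "ys \<in> (\<lambda>(x,xs). x#xs) ` (F 0 \<times> {xs. length xs = n \<and> (\<forall>i<n. xs!i \<in> F (Suc i))})"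
    then show "ys \<in> {xs. length xs = Suc n \<and> (\<forall>i<Suc n. xs!i \<in> F i)}"
      by (auto simp: less_Suc_eq_0_disj)
  qed
  have inj: "inj (\<lambda>(x::'a,xs). x#xs)" by (auto simp: inj_def)
  show ?case unfolding eq
    by (subst card_image[OF inj_on_subset[OF inj]], simp, subst prod.lessThan_Suc_shift, simp add: card_cartesian_product Suc del: prod.lessThan_Suc)
qed

definition V :: "nat \<Rightarrow> int list set" where
  "V N = {v. length v = N \<and> (\<forall>i<N. v!i \<in> {-1,0,1})}"

lemma finite_V: "finite (V N)"
proof -
  have "V N \<subseteq> {xs. set xs \<subseteq> {-1,0,1} \<and> length xs = N}"
    by (auto simp: V_def in_set_conv_nth)
  then show ?thesis using finite_lists_length_eq[of "{-1,0,1::int}" N] finite_subset by blast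
qed

lemma S_sub_V: "S_set N \<subseteq> V N"
  by (auto simp: S_set_def V_def dest!: nth_mem)

lemma least_neg:
  assumes "\<exists>i<length v. v!i \<noteq> (0::int)"
  shows "(LEAST i. map uminus v ! i \<noteq> 0) = (LEAST i. v!i \<noteq> 0)"
proof -
  let ?l = "LEAST i. v!i \<noteq> 0"
  obtain j where j: "j < length v" "v!j \<noteq> 0" using assms by blast
  have l1: "v!?l \<noteq> 0" using LeastI[of "\<lambda>i. v!i \<noteq> 0" j] j(2) by simp
  have l2: "?l \<le> j" using Least_le[of "\<lambda>i. v!i \<noteq> 0" j] j(2) by simp
  show ?thesis
  proof (rule Least_equality)
    show "map uminus v ! ?l \<noteq> 0" using l1 l2 j by simp
  next
    fix y assume "map uminus v ! y \<noteq> 0"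
    show "?l \<le> y"
    proof (cases "y < length v")
      case True
      then show ?thesis using \<open>map uminus v ! y \<noteq> 0\<close> by (simp add: Least_le)
    next
      case False then show ?thesis using l2 j by simp
    qed
  qed
qed

lemma neg_S:
  assumes "v \<in> V N" "\<exists>i<N. v!i \<noteq> 0"
  shows "v \<in> S_set N \<or> map uminus v \<in> S_set N"
proof -
  let ?l = "LEAST i. v!i \<noteq> 0"
  obtain j where j: "j < N" "v!j \<noteq> 0" using assms by blast
  have l1: "v!?l \<noteq> 0" using LeastI[of "\<lambda>i. v!i \<noteq> 0" j] j(2) by simp
  have l2: "?l \<le> j" using Least_le[of "\<lambda>i. v!i \<noteq> 0" j] j(2) by simp
  have len: "length v = N" using assms by (simp add: V_def)
  have vl: "v!?l \<in> {-1,0,1}" using assms l2 j by (simp add: V_def)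
  have setv: "set v \<subseteq> {-1,0,1}" using assms by (auto simp: V_def in_set_conv_nth)
  show ?thesis
  proof (cases "v!?l = 1")
    case True
    then show ?thesis using len setv j unfolding S_set_def by blast
  next
    case False
    then have "v!?l = -1" using vl l1 by auto
    moreover have "(LEAST i. map uminus v ! i \<noteq> 0) = ?l" using least_neg j len by blast
    ultimately have "map uminus v ! (LEAST i. map uminus v ! i \<noteq> 0) = 1" using l2 j len by simp
    moreover have "set (map uminus v) \<subseteq> {-1,0,1}" using setv by auto
    moreover have "\<exists>i<N. map uminus v ! i \<noteq> 0" using j len by auto
    ultimately show ?thesis using len unfolding S_set_def by auto
  qed
qed

lemma S_neg_disj:
  assumes "v \<in> S_set N" shows "map uminus v \<notin> S_set N"
proof
  assume a: "map uminus v \<in> S_set N"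
  have len: "length v = N" using assms by (simp add: S_set_def)
  obtain j where j: "j < N" "v!j \<noteq> 0" using assms by (auto simp: S_set_def)
  let ?l = "LEAST i. v!i \<noteq> 0"
  have l2: "?l \<le> j" using Least_le[of "\<lambda>i. v!i \<noteq> 0" j] j(2) by simp
  have "(LEAST i. map uminus v ! i \<noteq> 0) = ?l" using least_neg j len by blast
  then have "- (v!?l) = 1" using a l2 j len by (simp add: S_set_def)
  moreover have "v!?l = 1" using assms by (simp add: S_set_def)
  ultimately show False by simp
qed

lemma count_neg:
  assumes W: "W \<subseteq> V N" "\<forall>w\<in>W. map uminus w \<in> W" "replicate N 0 \<in> W"
  shows "card (V N - W) = 2 * card (S_set N - W)"
proof -
  have eq: "V N - W = (S_set N - W) \<union> map uminus ` (S_set N - W)"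
  proof (rule set_eqI, rule iffI)
    fix v assume v: "v \<in> V N - W"
    have len: "length v = N" using v by (simp add: V_def)
    have "\<exists>i<N. v!i \<noteq> 0"
    proof (rule ccontr)
      assume "\<not> ?thesis"
      then have "v = replicate N 0" using len by (auto intro: nth_equalityI)
      then show False using v W by auto
    qed
    then have "v \<in> S_set N \<or> map uminus v \<in> S_set N" using neg_S v by blast
    moreover have "map uminus v \<notin> W" using v W by force
    moreover have "v = map uminus (map uminus v)" by simp
    ultimately show "v \<in> (S_set N - W) \<union> map uminus ` (S_set N - W)" using v by blast
  next
    fix v assume v: "v \<in> (S_set N - W) \<union> map uminus ` (S_set N - W)"
    show "v \<in> V N - W"
    proof (cases "v \<in> S_set N - W")
      case True then show ?thesis using S_sub_V by blast
    next
      case False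
      then obtain u where u: "u \<in> S_set N - W" "v = map uminus u" using v by blast
      have "u \<in> V N" using u S_sub_V by blast
      then have "v \<in> V N" using u by (auto simp: V_def)
      moreover have "v \<notin> W" using u W by force
      ultimately show ?thesis by blast
    qed
  qed
  have fin: "finite (S_set N - W)" using finite_V S_sub_V finite_subset by blast
  have disj: "(S_set N - W) \<inter> map uminus ` (S_set N - W) = {}"
    using S_neg_disj by fastforce
  have inj: "inj (map (uminus :: int \<Rightarrow> int))" by (simp add: inj_mapI)
  have "card (map uminus ` (S_set N - W)) = card (S_set N - W)"
    by (rule card_image, rule inj_on_subset[OF inj], simp)
  then show ?thesis unfolding eq using card_Un_disjoint[OF fin _ disj] fin by simp
qed


lemma prod_01:
  assumes "finite A"
  shows "(\<Prod>j\<in>A. if P j then 1 else (0::real)) = (if \<forall>j\<in>A. P j then 1 else 0)"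
  using assms by (induction A rule: finite_induct) auto

lemma f_bool_line:
  assumes len: "length z = N" and i: "i < N"
  shows "f_bool \<phi> N z ((\<lambda>_. 0)(i := s)) = (1 - s) * of_bool (\<phi> z) + s * of_bool (\<phi> (flip_at z i))"
proof -
  let ?zf = "flip_at z i"
  let ?x = "(\<lambda>_. 0::real)(i := s)"
  have zf_len: "length ?zf = N" using len by (simp add: flip_at_def)
  have zf_i: "?zf ! i = (\<not> z ! i)" using len i by (simp add: flip_at_def)
  have zf_j: "\<And>j. j \<noteq> i \<Longrightarrow> ?zf ! j = z ! j" by (simp add: flip_at_def)
  have zne: "z \<noteq> ?zf" using zf_i by auto
  have termeq: "(\<Prod>j<N. (if (if w ! j then 1 else 0) = jz z j then 1 - ?x j else ?x j)) * of_bool (\<phi> w)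
      = (if w = z then (1 - s) * of_bool (\<phi> z) else 0) + (if w = ?zf then s * of_bool (\<phi> ?zf) else 0)"
    if w: "length w = N" for w
  proof -
    have fac: "\<And>j. (if (if w ! j then 1 else 0) = jz z j then 1 - ?x j else ?x j) =
         (if j = i then (if w!i = z!i then 1 - s else s) else (if w!j = z!j then 1 else 0))"
      by (auto simp: jz_def)
    have "(\<Prod>j<N. (if (if w ! j then 1 else 0) = jz z j then 1 - ?x j else ?x j))
        = (if w!i = z!i then 1 - s else s) * (\<Prod>j\<in>{..<N}-{i}. if w!j = z!j then 1 else (0::real))"
      unfolding fac using i by (subst prod.remove[of _ i]) (auto intro!: prod.cong)
    also have "\<dots> = (if w!i = z!i then 1 - s else s) * (if \<forall>j\<in>{..<N}-{i}. w!j = z!j then 1 else 0)"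
      by (simp add: prod_01)
    finally have P: "(\<Prod>j<N. (if (if w ! j then 1 else 0) = jz z j then 1 - ?x j else ?x j))
        = (if w!i = z!i then 1 - s else s) * (if \<forall>j\<in>{..<N}-{i}. w!j = z!j then 1 else 0)" .
    show ?thesis
    proof (cases "\<forall>j\<in>{..<N}-{i}. w!j = z!j")
      case True
      show ?thesis
      proof (cases "w!i = z!i")
        case True
        then have "w = z" using \<open>\<forall>j\<in>{..<N}-{i}. w!j = z!j\<close> w len
          by (intro nth_equalityI) auto
        then show ?thesis using P zne by simp
      next
        case False
        have "w = ?zf"
        proof (rule nth_equalityI)
          show "length w = length ?zf" using w zf_len by simp
          fix k assume "k < length w"
          then show "w!k = ?zf!k" using \<open>\<forall>j\<in>{..<N}-{i}. w!j = z!j\<close> w zf_i zf_j False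
            by (cases "k = i") auto
        qed
        then show ?thesis using P zne zf_i \<open>\<forall>j\<in>{..<N}-{i}. w!j = z!j\<close> by simp
      qed
    next
      case False
      then have "w \<noteq> z" "w \<noteq> ?zf" using zf_j by auto
      then show ?thesis using P False by simp
    qed
  qed
  have "f_bool \<phi> N z ?x = (\<Sum>w\<in>{w. length w = N}.
        (if w = z then (1 - s) * of_bool (\<phi> z) else 0) + (if w = ?zf then s * of_bool (\<phi> ?zf) else 0))"
    unfolding f_bool_def fourier_bool_def by (rule sum.cong) (auto simp: termeq)
  also have "\<dots> = (1 - s) * of_bool (\<phi> z) + s * of_bool (\<phi> ?zf)"
  proof -
    have fin: "finite {w::bool list. length w = N}" using finite_lists_length_eq[of "UNIV::bool set" N] by simp
    show ?thesis unfolding sum.distrib sum.delta[OF fin] using len zf_len by simp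
  qed
  finally show ?thesis .
qed

lemma zero_in_C: "(\<lambda>_. 0) \<in> C_bool N z"
proof -
  have d0: "(0::real) \<in> Delta1_face 0" unfolding Delta1_face_def
    unfolding mem_Collect_eq by (rule exI[where x="1::real"], rule exI[where x="0::real"], simp)
  have d1: "(0::real) \<in> Delta1_face 1" unfolding Delta1_face_def
    unfolding mem_Collect_eq by (rule exI[where x="0::real"], rule exI[where x="1::real"], simp)
  show ?thesis using d0 d1 by (simp add: C_bool_def jz_def)
qed

lemma insens_sign:
  assumes len: "length z = N" and i: "i < N" and eq: "\<phi> z = \<phi> (flip_at z i)"
  shows "sign_on (C_bool N z) (partial (\<pi> \<circ> f_bool \<phi> N z) i) \<in> {SZero, SU}"
proof -
  have "partial (\<pi> \<circ> f_bool \<phi> N z) i (\<lambda>_. 0) = 0"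
  proof -
    have c: "\<And>s. f_bool \<phi> N z ((\<lambda>_. 0)(i := s)) = of_bool (\<phi> z)"
    proof -
      fix s :: real
      have "f_bool \<phi> N z ((\<lambda>_. 0)(i := s)) = (1 - s) * of_bool (\<phi> z) + s * of_bool (\<phi> z)"
        using f_bool_line[OF len i, of \<phi> s] eq by simp
      also have "\<dots> = of_bool (\<phi> z)" by (simp add: left_diff_distrib)
      finally show "f_bool \<phi> N z ((\<lambda>_. 0)(i := s)) = of_bool (\<phi> z)" .
    qed
    show ?thesis unfolding partial_def comp_def c by simp
  qed
  note g0 = this
  have mem: "(\<lambda>_. 0) \<in> C_bool N z" by (rule zero_in_C)
  have n1: "\<not> (\<forall>x\<in>C_bool N z. partial (\<pi> \<circ> f_bool \<phi> N z) i x > 0)"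
  proof
    assume "\<forall>x\<in>C_bool N z. partial (\<pi> \<circ> f_bool \<phi> N z) i x > 0"
    from bspec[OF this mem] show False using g0 by simp
  qed
  have n2: "\<not> (\<forall>x\<in>C_bool N z. partial (\<pi> \<circ> f_bool \<phi> N z) i x < 0)"
  proof
    assume "\<forall>x\<in>C_bool N z. partial (\<pi> \<circ> f_bool \<phi> N z) i x < 0"
    from bspec[OF this mem] show False using g0 by simp
  qed
  show ?thesis unfolding sign_on_def by (simp only: n1 n2 if_False) simp
qed


lemma card_V: "card (V N) = 3 ^ N"
proof -
  have "card (V N) = (\<Prod>i<N. card ({-1,0,1::int}))"
    unfolding V_def by (rule card_lists_nth)
  then show ?thesis by (simp add: numeral_3_eq_3)
qed

lemma cs_at_le:
  assumes len: "length z = N"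
  shows "cs_bool_at \<phi> N z \<le> real (sens_at \<phi> N z)"
proof -
  define A where "A = {i. i < N \<and> \<phi> z \<noteq> \<phi> (flip_at z i)}"
  define W where "W = {v \<in> V N. \<forall>i<N. i \<notin> A \<longrightarrow> v!i = 0}"
  define C where "C = C_bool N z"
  define f where "f = f_bool \<phi> N z"
  define E where "E = Elim N (map to_sgn4 ` (S_set N - Sens N C f))"
  have a: "sens_at \<phi> N z = card A" by (simp add: sens_at_def A_def)
  have AN: "A \<subseteq> {..<N}" by (auto simp: A_def)
  have cardW: "card W = 3 ^ card A"
  proof -
    have "W = {v. length v = N \<and> (\<forall>i<N. v!i \<in> (if i \<in> A then {-1,0,1} else {0}))}"
      by (auto simp: W_def V_def)
    then have "card W = (\<Prod>i<N. card (if i \<in> A then {-1,0,1::int} else {0}))"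
      by (simp add: card_lists_nth)
    also have "\<dots> = (\<Prod>i<N. (if i \<in> A then 3 else 1))"
      by (rule prod.cong) auto
    also have "\<dots> = 3 ^ card ({..<N} \<inter> A)"
      by (simp add: prod.If_cases)
    also have "{..<N} \<inter> A = A" using AN by blast
    finally show ?thesis .
  qed
  have WV: "W \<subseteq> V N" by (auto simp: W_def)
  have Wneg: "\<forall>w\<in>W. map uminus w \<in> W" by (auto simp: W_def V_def)
  have Wrep: "replicate N 0 \<in> W" by (auto simp: W_def V_def)
  have c1: "card (V N - W) = 2 * card (S_set N - W)" using count_neg[OF WV Wneg Wrep] .
  have c1': "card (V N - W) = 3 ^ N - 3 ^ card A"
    using card_Diff_subset[OF finite_subset[OF WV finite_V] WV] card_V cardW by simp
  have c2: "card (V N - {replicate N 0}) = 2 * card (S_set N - {replicate N 0})"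
    using count_neg[of "{replicate N 0}" N] by (auto simp: V_def)
  have c2': "card (V N - {replicate N 0}) = 3 ^ N - 1"
    using card_V by (simp add: V_def)
  have S0: "S_set N - {replicate N 0} = S_set N" by (auto simp: S_set_def)
  have finS: "finite (S_set N)" using finite_V S_sub_V finite_subset by blast
  have ES: "E \<subseteq> S_set N" by (auto simp: E_def Elim_def)
  have SE: "S_set N - W \<subseteq> E"
  proof
    fix v assume v: "v \<in> S_set N - W"
    have vV: "v \<in> V N" using v S_sub_V by blast
    have lv: "length v = N" using vV by (simp add: V_def)
    obtain i where i: "i < N" "i \<notin> A" "v!i \<noteq> 0" using v vV by (auto simp: W_def)
    define u where "u = map (\<lambda>j. if j \<in> A then 0 else v!j) [0..<N]"
    have lu: "length u = N" by (simp add: u_def)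
    have un: "\<And>j. j < N \<Longrightarrow> u!j = (if j \<in> A then 0 else v!j)" by (simp add: u_def)
    have uV: "u \<in> V N" using vV by (auto simp: V_def un lu)
    have "\<exists>i<N. u!i \<noteq> 0" using i un by auto
    then have "u \<in> S_set N \<or> map uminus u \<in> S_set N" using neg_S uV by blast
    then obtain c :: int where c: "c \<in> {1,-1}" "map ((*) c) u \<in> S_set N"
    proof
      assume "u \<in> S_set N"
      moreover have "map ((*) (1::int)) u = u" by (induct u) auto
      ultimately show thesis using that[of 1] by simp
    next
      assume "map uminus u \<in> S_set N"
      moreover have "map uminus u = map ((*) (-1)) u" by simp
      ultimately show thesis using that[of "-1"] by simp
    qed
    define w where "w = map ((*) c) u"
    have lw: "length w = N" by (simp add: w_def lu)
    have wn: "\<And>j. j < N \<Longrightarrow> w!j = c * (if j \<in> A then 0 else v!j)" by (simp add: w_def un lu)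
    have wS: "w \<in> S_set N" using c by (simp add: w_def)
    have c0: "c \<noteq> 0" using c by auto
    have wnz: "\<And>j. j < N \<Longrightarrow> w!j \<noteq> 0 \<Longrightarrow> j \<notin> A" using wn by fastforce
    have notSens: "w \<notin> Sens N C f"
    proof
      assume "w \<in> Sens N C f"
      then obtain \<pi> where el: "eliminates (Sign_on N C (\<pi> \<circ> f)) w" by (auto simp: Sens_def)
      then obtain j where j: "j < N" "Sign_on N C (\<pi> \<circ> f) ! j \<noteq> SZero" "w!j \<noteq> 0"
        using lw by (auto simp: eliminates_def)
      have jA: "j \<notin> A" using wnz j by blast
      have sgn: "Sign_on N C (\<pi> \<circ> f) ! j = sign_on C (partial (\<pi> \<circ> f) j)"
        using j by (simp add: Sign_on_def)
      have "sign_on C (partial (\<pi> \<circ> f) j) \<in> {SZero, SU}"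
        unfolding C_def f_def by (rule insens_sign[OF len j(1)]) (use jA j in \<open>auto simp: A_def\<close>)
      then have "Sign_on N C (\<pi> \<circ> f) ! j = SU" using sgn j by auto
      then have "w!j = 0" using el j lw by (auto simp: eliminates_def)
      then show False using j by simp
    qed
    have elim: "eliminates (map to_sgn4 w) v"
      unfolding eliminates_def
    proof (intro conjI)
      show "\<exists>i<length v. map to_sgn4 w ! i \<noteq> SZero \<and> v ! i \<noteq> 0"
        using i lv lw wn c0 by (rule_tac x=i in exI) (auto simp: to_sgn4_def)
      show "\<exists>k\<in>{1, -1}. \<forall>i<length v. v ! i \<noteq> 0 \<and> map to_sgn4 w ! i \<noteq> SZero \<longrightarrow>
            map to_sgn4 w ! i = to_sgn4 (k * v ! i)"
        using c lv lw wn by (rule_tac x=c in bexI) (auto simp: to_sgn4_def)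
      show "\<forall>i<length v. map to_sgn4 w ! i = SU \<longrightarrow> v ! i = 0"
        using lv lw by (auto simp: to_sgn4_def)
    qed
    show "v \<in> E" unfolding E_def Elim_def using v notSens wS elim by blast
  qed
  have finE: "finite E" using finS ES finite_subset by blast
  have e1: "card (S_set N - W) \<le> card E" using card_mono[OF finE SE] .
  have e2: "card E \<le> card (S_set N)" using card_mono[OF finS ES] .
  have p3: "(3::nat) ^ card A \<le> 3 ^ N" using AN card_mono[of "{..<N}" A] by simp
  have p1: "(1::nat) \<le> 3 ^ card A" by simp
  have lo: "real (3 ^ N) - 2 * real (card E) \<le> 3 ^ card A"
  proof -
    have "(3::nat) ^ N \<le> 3 ^ card A + 2 * card E" using e1 c1 c1' p3 by linarith
    then have "real ((3::nat) ^ N) \<le> real (3 ^ card A + 2 * card E)" by (rule of_nat_mono)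
    then show ?thesis by simp
  qed
  have hi: "1 \<le> real (3 ^ N) - 2 * real (card E)"
  proof -
    have "2 * card E \<le> 3 ^ N - 1" using e2 c2 c2' S0 by simp
    moreover have "(1::nat) \<le> 3 ^ N" by simp
    ultimately show ?thesis by linarith
  qed
  have "cs_bool_at \<phi> N z = log 3 (3 ^ N - 2 * real (card E))"
    by (simp add: cs_bool_at_def cs_of_def E_def C_def f_def)
  also have "\<dots> \<le> log 3 (3 ^ card A)"
    using lo hi by (subst log_le_cancel_iff) auto
  also have "\<dots> = real (card A)" by simp
  finally show ?thesis using a by simp
qed

theorem mainTheorem9:
  fixes \<phi> :: "bool list \<Rightarrow> bool" and N :: nat
  shows "cs_bool \<phi> N \<le> real (sens \<phi> N)"
proof -
  have fin: "finite {z::bool list. length z = N}" using finite_lists_length_eq[of "UNIV::bool set" N] by simp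
  have ne: "{z::bool list. length z = N} \<noteq> {}" by (auto intro: exI[of _ "replicate N False"])
  have "\<forall>z\<in>{z. length z = N}. cs_bool_at \<phi> N z \<le> real (sens \<phi> N)"
  proof
    fix z :: "bool list" assume z: "z \<in> {z. length z = N}"
    have "sens_at \<phi> N z \<le> sens \<phi> N" unfolding sens_def using fin z by (intro Max_ge) auto
    then show "cs_bool_at \<phi> N z \<le> real (sens \<phi> N)" using cs_at_le[of z N \<phi>] z by simp
  qed
  then show ?thesis unfolding cs_bool_def using fin ne by (simp add: Max_le_iff)
qed

end
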